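(* Let $K$ be a compact line and let $G:K\to\mathbb{R}$ be a nondecreasing function. If $a=0_K$ or $a=1_K$, then either there exists a neighborhood $V$ of $a$ such that $V\setminus\{a\}\neq\emptyset$ and $G$ is constant on $V\setminus\{a\}$, or $a$ has a countable local basis.
   Context: A compact line is a compact space $K$ whose topology is the order topology of a linear order on $K$; $0_K$ and $1_K$ denote its minimum and maximum, and $0_K<1_K$. *)

theory Defs
  imports Complex_Main "HOL-Library.Countable_Set"
begin

text \<open>A compact line: a type of class linorder_topology (topology = order topology)
  whose universe is compact and has at least two points.\<close>

definition countable_local_basis :: "'a::topological_space \<Rightarrow> bool" where
  "countable_local_basis a \<longleftrightarrow>
     (\<exists>\<B>::'a set set. countable \<B> \<and> (\<forall>B\<in>\<B>. open B \<and> a \<in> B) \<and>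
        (\<forall>U. open U \<and> a \<in> U \<longrightarrow> (\<exists>B\<in>\<B>. B \<subseteq> U)))"

definition is_nhd :: "'a::topological_space set \<Rightarrow> 'a \<Rightarrow> bool" where
  "is_nhd V a \<longleftrightarrow> (\<exists>U. open U \<and> a \<in> U \<and> U \<subseteq> V)"

end

theory Submission
  imports Defs
begin

lemma min_case:
  fixes G :: "'a::linorder_topology \<Rightarrow> real" and a :: 'a
  assumes ex: "\<exists>y. a < y" and mono: "mono G" and amin: "\<forall>x. a \<le> x"
  shows "(\<exists>V. is_nhd V a \<and> V - {a} \<noteq> {} \<and> (\<exists>c. \<forall>x\<in>V - {a}. G x = c))
         \<or> countable_local_basis a"
proof (cases "\<exists>b>a. \<exists>c. \<forall>x\<in>{a<..<b}. G x = c")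
  case True
  then obtain b c where b: "a < b" and c: "\<forall>x\<in>{a<..<b}. G x = c" by blast
  show ?thesis
  proof (cases "{a<..<b} = {}")
    case True
    have eq: "{..<b} = {a}"
    proof
      show "{..<b} \<subseteq> {a}"
      proof
        fix x assume "x \<in> {..<b}"
        show "x \<in> {a}"
        proof (rule ccontr)
          assume "x \<notin> {a}"
          then have "a < x" using amin[rule_format, of x] by (simp add: order_le_less)
          then have "x \<in> {a<..<b}" using \<open>x \<in> {..<b}\<close> by simp
          then show False using True by blast
        qed
      qed
    qed (use b in auto)
    have oa: "open {a}" using eq open_lessThan[of b] by metis
    have "countable_local_basis a" unfolding countable_local_basis_def
    proof (rule exI[of _ "{{a}}"], intro conjI allI impI ballI)
      show "countable {{a}}" by simp
    next
      fix B assume "B \<in> {{a}}" then show "open B" "a \<in> B" using oa by auto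
    next
      fix U assume "open U \<and> a \<in> U" then show "\<exists>B\<in>{{a}}. B \<subseteq> U" by blast
    qed
    then show ?thesis by blast
  next
    case False
    have "is_nhd {..<b} a" unfolding is_nhd_def
      by (rule exI[of _ "{..<b}"]) (simp add: b)
    moreover have eq: "{..<b} - {a} = {a<..<b}" using amin by (auto simp: less_le)
    moreover have "{..<b} - {a} \<noteq> {}" using False eq by simp
    moreover have "\<forall>x\<in>{..<b} - {a}. G x = c" using c eq by simp
    ultimately show ?thesis by blast
  qed
next
  case False
  hence nc: "\<forall>b>a. \<forall>c. \<exists>x\<in>{a<..<b}. G x \<noteq> c" by blast
  define c where "c = Inf (G ` {a<..})"
  have bdd: "bdd_below (G ` {a<..})"
  proof (rule bdd_belowI)
    fix y assume "y \<in> G ` {a<..}"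
    then obtain x where "y = G x" by blast
    then show "G a \<le> y" using mono amin by (simp add: monoD)
  qed
  have ne: "G ` {a<..} \<noteq> {}" using ex by auto
  have "\<forall>n::nat. \<exists>x. a < x \<and> G x < c + 1/Suc n"
  proof
    fix n :: nat
    have "Inf (G ` {a<..}) < c + 1/Suc n" unfolding c_def by simp
    from cInf_lessD[OF ne this] show "\<exists>x. a < x \<and> G x < c + 1/Suc n" by auto
  qed
  from choice[OF this] obtain bn where bn: "\<forall>n. a < bn n \<and> G (bn n) < c + 1/Suc n" by blast
  have "countable_local_basis a"
    unfolding countable_local_basis_def
  proof (intro exI[of _ "range (\<lambda>n. {..<bn n})"] conjI ballI allI impI)
    show "countable (range (\<lambda>n. {..<bn n}))" by simp
  next
    fix B assume "B \<in> range (\<lambda>n. {..<bn n})"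
    then show "open B" "a \<in> B" using bn by auto
  next
    fix U assume U: "open U \<and> a \<in> U"
    obtain y where y: "a < y" using ex by blast
    have "\<exists>b>a. {a..<b} \<subseteq> U" using open_right[of U a y] U y by blast
    then obtain b where b: "b > a" "{a..<b} \<subseteq> U" by blast
    obtain x where x: "x \<in> {a<..<b}" "G x \<noteq> c" using nc b(1) by blast
    have "c \<le> G x" unfolding c_def using bdd x by (auto intro: cInf_lower)
    with x have "0 < G x - c" by auto
    then obtain n where n: "inverse (real (Suc n)) < G x - c"
      using reals_Archimedean by blast
    have n': "1/real (Suc n) < G x - c" using n by (simp add: inverse_eq_divide)
    have "G (bn n) < c + 1/real (Suc n)" using bn by blast
    hence "G (bn n) < G x" using n' by linarith
    hence "bn n < x" using mono unfolding mono_def by (metis not_less)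
    hence "{..<bn n} \<subseteq> U" using b x amin by (auto simp: subset_eq)
    then show "\<exists>B\<in>range (\<lambda>n. {..<bn n}). B \<subseteq> U" by blast
  qed
  then show ?thesis by blast
qed

lemma max_case:
  fixes G :: "'a::linorder_topology \<Rightarrow> real" and a :: 'a
  assumes ex: "\<exists>y. y < a" and mono: "mono G" and amax: "\<forall>x. x \<le> a"
  shows "(\<exists>V. is_nhd V a \<and> V - {a} \<noteq> {} \<and> (\<exists>c. \<forall>x\<in>V - {a}. G x = c))
         \<or> countable_local_basis a"
proof (cases "\<exists>b<a. \<exists>c. \<forall>x\<in>{b<..<a}. G x = c")
  case True
  then obtain b c where b: "b < a" and c: "\<forall>x\<in>{b<..<a}. G x = c" by blast
  show ?thesis
  proof (cases "{b<..<a} = {}")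
    case True
    have eq: "{b<..} = {a}"
    proof
      show "{b<..} \<subseteq> {a}"
      proof
        fix x assume "x \<in> {b<..}"
        show "x \<in> {a}"
        proof (rule ccontr)
          assume "x \<notin> {a}"
          then have "x < a" using amax[rule_format, of x] by (simp add: order_le_less)
          then have "x \<in> {b<..<a}" using \<open>x \<in> {b<..}\<close> by simp
          then show False using True by blast
        qed
      qed
    qed (use b in auto)
    have oa: "open {a}" using eq open_greaterThan[of b] by metis
    have "countable_local_basis a" unfolding countable_local_basis_def
    proof (rule exI[of _ "{{a}}"], intro conjI allI impI ballI)
      show "countable {{a}}" by simp
    next
      fix B assume "B \<in> {{a}}" then show "open B" "a \<in> B" using oa by auto
    next
      fix U assume "open U \<and> a \<in> U" then show "\<exists>B\<in>{{a}}. B \<subseteq> U" by blast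
    qed
    then show ?thesis by blast
  next
    case False
    have "is_nhd {b<..} a" unfolding is_nhd_def
      by (rule exI[of _ "{b<..}"]) (simp add: b)
    moreover have eq: "{b<..} - {a} = {b<..<a}" using amax by (auto simp: less_le)
    moreover have "{b<..} - {a} \<noteq> {}" using False eq by simp
    moreover have "\<forall>x\<in>{b<..} - {a}. G x = c" using c eq by simp
    ultimately show ?thesis by blast
  qed
next
  case False
  hence nc: "\<forall>b<a. \<forall>c. \<exists>x\<in>{b<..<a}. G x \<noteq> c" by blast
  define c where "c = Sup (G ` {..<a})"
  have bdd: "bdd_above (G ` {..<a})"
  proof (rule bdd_aboveI)
    fix y assume "y \<in> G ` {..<a}"
    then obtain x where "y = G x" by blast
    then show "y \<le> G a" using mono amax by (simp add: monoD)
  qed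
  have ne: "G ` {..<a} \<noteq> {}" using ex by auto
  have "\<forall>n::nat. \<exists>x. x < a \<and> c - 1/Suc n < G x"
  proof
    fix n :: nat
    have "c - 1/Suc n < Sup (G ` {..<a})" unfolding c_def by simp
    from less_cSupD[OF ne this] show "\<exists>x. x < a \<and> c - 1/Suc n < G x" by auto
  qed
  from choice[OF this] obtain bn where bn: "\<forall>n. bn n < a \<and> c - 1/Suc n < G (bn n)" by blast
  have "countable_local_basis a"
    unfolding countable_local_basis_def
  proof (intro exI[of _ "range (\<lambda>n. {bn n<..})"] conjI ballI allI impI)
    show "countable (range (\<lambda>n. {bn n<..}))" by simp
  next
    fix B assume "B \<in> range (\<lambda>n. {bn n<..})"
    then show "open B" "a \<in> B" using bn by auto
  next
    fix U assume U: "open U \<and> a \<in> U"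
    obtain y where y: "y < a" using ex by blast
    have "\<exists>b<a. {b<..a} \<subseteq> U" using open_left[of U a y] U y by blast
    then obtain b where b: "b < a" "{b<..a} \<subseteq> U" by blast
    obtain x where x: "x \<in> {b<..<a}" "G x \<noteq> c" using nc b(1) by blast
    have "G x \<le> c" unfolding c_def using bdd x by (auto intro: cSup_upper)
    with x have "0 < c - G x" by auto
    then obtain n where n: "inverse (real (Suc n)) < c - G x"
      using reals_Archimedean by blast
    have n': "1/real (Suc n) < c - G x" using n by (simp add: inverse_eq_divide)
    have "c - 1/real (Suc n) < G (bn n)" using bn by blast
    hence "G x < G (bn n)" using n' by linarith
    hence "x < bn n" using mono unfolding mono_def by (metis not_less)
    hence "{bn n<..} \<subseteq> U" using b x amax by (auto simp: subset_eq)
    then show "\<exists>B\<in>range (\<lambda>n. {bn n<..}). B \<subseteq> U" by blast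
  qed
  then show ?thesis by blast
qed

theorem lemma5p1:
  fixes G :: "'a::linorder_topology \<Rightarrow> real" and a :: 'a
  assumes "compact (UNIV :: 'a set)"
    and "\<exists>x y :: 'a. x < y"
    and "mono G"
    and "(\<forall>x. a \<le> x) \<or> (\<forall>x. x \<le> a)"
  shows "(\<exists>V. is_nhd V a \<and> V - {a} \<noteq> {} \<and> (\<exists>c. \<forall>x\<in>V - {a}. G x = c))
         \<or> countable_local_basis a"
  using assms(4)
proof
  assume h: "\<forall>x. a \<le> x"
  then have "\<exists>y. a < y" using assms(2) by (meson le_less_trans)
  then show ?thesis using min_case assms(3) h by blast
next
  assume h: "\<forall>x. x \<le> a"
  then have "\<exists>y. y < a" using assms(2) by (meson less_le_trans)
  then show ?thesis using max_case assms(3) h by blast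
qed

end
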